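(* Let $\sigma:\mathbb{R}\to\mathbb{R}$ be either a continuous and strictly monotonic function or the ReLU function $\sigma(t)=\max\{t,0\}$. Then for all input and output dimensions $d_{in},d_{out}$, $d_{in}<\omega_{\min}(\sigma,d_{in},d_{out})$.
   Context: A neural network function $F:\mathbb{R}^{d_{in}}\to\mathbb{R}^{d_{out}}$ with $L$ layers and activation $\sigma$ has the form $F=W_L\circ A_{L-1}\circ\dots\circ A_1$, where $A_j(x)=\sigma(W_jx+b_j)$ with $W_j\in\mathbb{R}^{d_j\times d_{j-1}}$, $b_j\in\mathbb{R}^{d_j}$, $d_0=d_{in}$, $d_L=d_{out}$, and $\sigma$ applied componentwise. Its width is $\omega_F=\max\{d_j:j=1,\dots,L\}$. For $f:D\to\mathbb{R}^m$ write $\|f\|_D=\sup\{\|f(x)\|:x\in D\}$ (Euclidean norm). Fix real numbers $a<b$. $\omega_{\min}(\sigma,d_{in},d_{out})$ denotes the minimum width $\omega$ such that for every continuous $f:[a,b]^{d_{in}}\to\mathbb{R}^{d_{out}}$ and every $\varepsilon>0$ there exists a neural network function $F:\mathbb{R}^{d_{in}}\to\mathbb{R}^{d_{out}}$ with activation $\sigma$ and $\omega_F\le\omega$ such that $\|f-F\|_{[a,b]^{d_{in}}}<\varepsilon$. *)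

theory Defs
  imports "HOL-Analysis.Analysis" "HOL-Library.Extended_Nat"
begin

text \<open>Vectors in R^d are represented as functions nat => real; only the
  components with index < d are meaningful.  A network is given by its list of
  layer dimensions ds = [d_0, ..., d_L] (L = length ds - 1 >= 1), weights
  W j i k (entry (i,k) of W_j) and biases b j i (entry i of b_j).\<close>

fun nn_hidden :: "(real \<Rightarrow> real) \<Rightarrow> nat list \<Rightarrow> (nat \<Rightarrow> nat \<Rightarrow> nat \<Rightarrow> real)
    \<Rightarrow> (nat \<Rightarrow> nat \<Rightarrow> real) \<Rightarrow> (nat \<Rightarrow> real) \<Rightarrow> nat \<Rightarrow> (nat \<Rightarrow> real)" where
  "nn_hidden \<sigma> ds W b x 0 = x"
| "nn_hidden \<sigma> ds W b x (Suc j) =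
     (\<lambda>i. if i < ds ! Suc j
          then \<sigma> ((\<Sum>k<ds ! j. W (Suc j) i k * nn_hidden \<sigma> ds W b x j k) + b (Suc j) i)
          else 0)"

definition nn_eval :: "(real \<Rightarrow> real) \<Rightarrow> nat list \<Rightarrow> (nat \<Rightarrow> nat \<Rightarrow> nat \<Rightarrow> real)
    \<Rightarrow> (nat \<Rightarrow> nat \<Rightarrow> real) \<Rightarrow> (nat \<Rightarrow> real) \<Rightarrow> (nat \<Rightarrow> real)" where
  "nn_eval \<sigma> ds W b x =
     (let L = length ds - 1 in
      (\<lambda>i. if i < ds ! L
           then (\<Sum>k<ds ! (L - 1). W L i k * nn_hidden \<sigma> ds W b x (L - 1) k)
           else 0))"

definition is_nn_fun :: "(real \<Rightarrow> real) \<Rightarrow> nat \<Rightarrow> nat \<Rightarrow> nat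
    \<Rightarrow> ((nat \<Rightarrow> real) \<Rightarrow> (nat \<Rightarrow> real)) \<Rightarrow> bool" where
  "is_nn_fun \<sigma> din dout w F \<longleftrightarrow>
     (\<exists>ds W b. length ds \<ge> 2 \<and> ds ! 0 = din \<and> last ds = dout
        \<and> (\<forall>d\<in>set ds. 0 < d)
        \<and> Max (set (tl ds)) \<le> w
        \<and> F = nn_eval \<sigma> ds W b)"

definition cube :: "real \<Rightarrow> real \<Rightarrow> nat \<Rightarrow> (nat \<Rightarrow> real) set" where
  "cube a b din = {x. (\<forall>i<din. a \<le> x i \<and> x i \<le> b) \<and> (\<forall>i\<ge>din. x i = 0)}"

definition vec_norm :: "nat \<Rightarrow> (nat \<Rightarrow> real) \<Rightarrow> real" where
  "vec_norm d v = sqrt (\<Sum>i<d. (v i)\<^sup>2)"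

definition approx_width :: "(real \<Rightarrow> real) \<Rightarrow> real \<Rightarrow> real \<Rightarrow> nat \<Rightarrow> nat \<Rightarrow> nat \<Rightarrow> bool" where
  "approx_width \<sigma> a b din dout w \<longleftrightarrow>
     (\<forall>f. (\<forall>i<dout. continuous_on (cube a b din) (\<lambda>x. f x i)) \<longrightarrow>
        (\<forall>\<epsilon>>0. \<exists>F. is_nn_fun \<sigma> din dout w F \<and>
            (SUP x\<in>cube a b din. vec_norm dout (\<lambda>i. f x i - F x i)) < \<epsilon>))"

text \<open>Minimal width; it is \<infinity> if no finite width suffices.\<close>
definition omega_min :: "(real \<Rightarrow> real) \<Rightarrow> real \<Rightarrow> real \<Rightarrow> nat \<Rightarrow> nat \<Rightarrow> enat" where
  "omega_min \<sigma> a b din dout = Inf {enat w | w. approx_width \<sigma> a b din dout w}"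

end

theory Submission
  imports Defs "Jordan_Normal_Form.Determinant"
begin


lemma H_zero: "1 \<le> k \<Longrightarrow> ds ! k \<le> i \<Longrightarrow> nn_hidden \<sigma> ds W B x k i = 0"
  by (cases k) auto

lemma cont_H:
  assumes "continuous_on UNIV \<sigma>"
  shows "continuous_on UNIV (\<lambda>x. nn_hidden \<sigma> ds W B x k i)"
proof (induction k arbitrary: i)
  case 0
  then show ?case by simp
next
  case (Suc k)
  show ?case
  proof (cases "i < ds ! Suc k")
    case True
    then show ?thesis
      by (simp, intro continuous_on_compose2[OF assms] continuous_intros Suc.IH) auto
  qed simp
qed

lemma cont_H_vec:
  assumes "continuous_on UNIV \<sigma>"
  shows "continuous_on S (\<lambda>x. nn_hidden \<sigma> ds W B x k)"
  by (intro continuous_on_coordinatewise_then_product continuous_on_subset[OF cont_H[OF assms]]) auto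

lemma cube_PiE: "cube a b n = PiE UNIV (\<lambda>i. if i < n then {a..b} else {0})"
  unfolding cube_def by (auto simp: PiE_iff) (metis atLeastAtMost_iff not_less singletonD)+

lemma compact_cube: "compact (cube a b n)"
proof -
  have "compactin (product_topology (\<lambda>i. euclidean) UNIV) (PiE UNIV (\<lambda>i. if i < n then {a..b::real} else {0}))"
    by (subst compactin_PiE) (auto simp: compactin_euclidean_iff)
  then show ?thesis
    by (simp add: cube_PiE euclidean_product_topology compactin_euclidean_iff)
qed

definition strict_mono_or_anti :: "(real \<Rightarrow> real) \<Rightarrow> bool" where
  "strict_mono_or_anti \<sigma> \<longleftrightarrow> ((\<forall>s t. s < t \<longrightarrow> \<sigma> s < \<sigma> t) \<or> (\<forall>s t. s < t \<longrightarrow> \<sigma> t < \<sigma> s))"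

lemma smoa_inj: "strict_mono_or_anti \<sigma> \<Longrightarrow> inj \<sigma>"
  unfolding strict_mono_or_anti_def inj_def
  by (metis linorder_neqE_linordered_idom order_less_irrefl)

lemma range_open:
  assumes cont: "continuous_on UNIV \<sigma>" and sm: "strict_mono_or_anti \<sigma>"
    and lim: "(g \<longlongrightarrow> \<sigma> t) F"
  shows "\<forall>\<^sub>F s in F. g s \<in> range \<sigma>"
proof -
  have c: "continuous_on {t-1..t+1} \<sigma>" using cont continuous_on_subset by blast
  from sm consider "\<forall>s t. s < t \<longrightarrow> \<sigma> s < \<sigma> t" | "\<forall>s t. s < t \<longrightarrow> \<sigma> t < \<sigma> s"
    unfolding strict_mono_or_anti_def by blast
  then show ?thesis
  proof cases
    case 1
    then have "\<sigma> (t-1) < \<sigma> t" "\<sigma> t < \<sigma> (t+1)" by auto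
    then have "\<forall>\<^sub>F s in F. \<sigma> (t-1) < g s \<and> g s < \<sigma> (t+1)"
      using lim by (auto intro: eventually_conj order_tendstoD)
    then show ?thesis
    proof (rule eventually_mono)
      fix s assume "\<sigma> (t-1) < g s \<and> g s < \<sigma> (t+1)"
      then obtain x where "\<sigma> x = g s" using IVT'[of \<sigma> "t-1" "g s" "t+1"] c by force
      then show "g s \<in> range \<sigma>" by (metis rangeI)
    qed
  next
    case 2
    then have "\<sigma> (t+1) < \<sigma> t" "\<sigma> t < \<sigma> (t-1)" by auto
    then have "\<forall>\<^sub>F s in F. \<sigma> (t+1) < g s \<and> g s < \<sigma> (t-1)"
      using lim by (auto intro: eventually_conj order_tendstoD)
    then show ?thesis
    proof (rule eventually_mono)
      fix s assume "\<sigma> (t+1) < g s \<and> g s < \<sigma> (t-1)"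
      then obtain x where "\<sigma> x = g s" using IVT2'[of \<sigma> "t+1" "g s" "t-1"] c by force
      then show "g s \<in> range \<sigma>" by (metis rangeI)
    qed
  qed
qed

lemma inv_lim:
  assumes cont: "continuous_on UNIV \<sigma>" and sm: "strict_mono_or_anti \<sigma>"
    and lim: "(g \<longlongrightarrow> \<sigma> t) F"
  shows "((\<lambda>s. inv_into UNIV \<sigma> (g s)) \<longlongrightarrow> t) F"
proof -
  have "isCont (inv_into UNIV \<sigma>) (\<sigma> t)"
    by (rule isCont_inverse_function[of 1]) (auto simp: inv_f_f[OF smoa_inj[OF sm]]
        intro: continuous_on_interior[OF cont])
  from isCont_tendsto_compose[OF this lim] show ?thesis
    by (simp add: inv_f_f[OF smoa_inj[OF sm]])
qed

lemma inv_apply: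
  fixes Q W :: "nat \<Rightarrow> nat \<Rightarrow> real"
  assumes "\<forall>i<n. \<forall>l<n. (\<Sum>t<n. Q i t * W t l) = (if i = l then 1 else 0)" "i < n"
  shows "(\<Sum>l<n. Q i l * (\<Sum>r<n. W l r * h r)) = h i"
proof -
  have "(\<Sum>l<n. Q i l * (\<Sum>r<n. W l r * h r)) = (\<Sum>l<n. \<Sum>r<n. Q i l * W l r * h r)"
    by (simp add: sum_distrib_left mult.assoc)
  also have "\<dots> = (\<Sum>r<n. \<Sum>l<n. Q i l * W l r * h r)" by (rule sum.swap)
  also have "\<dots> = (\<Sum>r<n. (\<Sum>l<n. Q i l * W l r) * h r)"
    by (simp add: sum_distrib_right)
  also have "\<dots> = (\<Sum>r<n. (if i = r then h r else 0))"
    using assms by (intro sum.cong) auto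
  also have "\<dots> = h i" using assms(2) by simp
  finally show ?thesis .
qed



definition inv_pair :: "nat \<Rightarrow> (nat \<Rightarrow> nat \<Rightarrow> real) \<Rightarrow> (nat \<Rightarrow> nat \<Rightarrow> real) \<Rightarrow> bool" where
  "inv_pair n P Q \<longleftrightarrow> (\<forall>i<n. \<forall>l<n. (\<Sum>t<n. P i t * Q t l) = (if i = l then 1 else 0))
      \<and> (\<forall>i<n. \<forall>l<n. (\<Sum>t<n. Q i t * P t l) = (if i = l then 1 else 0))"

lemma local_surj:
  assumes cont: "continuous_on UNIV \<sigma>" and sm: "strict_mono_or_anti \<sigma>"
  shows "(\<forall>k\<le>m. ds ! k = n) \<longrightarrow> (\<forall>k. 1 \<le> k \<longrightarrow> k \<le> m \<longrightarrow> inv_pair n (W k) (Q k)) \<longrightarrow>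
    (\<forall>u y. (\<forall>i<n. ((\<lambda>s. u s i) \<longlongrightarrow> nn_hidden \<sigma> ds W B y m i) F) \<longrightarrow>
      (\<exists>X. (\<forall>i<n. ((\<lambda>s. X s i) \<longlongrightarrow> y i) F) \<and>
           (\<forall>\<^sub>F s in F. \<forall>i<n. nn_hidden \<sigma> ds W B (X s) m i = u s i) \<and>
           (\<forall>s i. n \<le> i \<longrightarrow> X s i = 0)))"
proof (induction m)
  case 0
  show ?case
  proof (intro impI allI)
    fix u y
    assume lim: "\<forall>i<n. ((\<lambda>s. u s i) \<longlongrightarrow> nn_hidden \<sigma> ds W B y 0 i) F"
    show "\<exists>X. (\<forall>i<n. ((\<lambda>s. X s i) \<longlongrightarrow> y i) F) \<and>
           (\<forall>\<^sub>F s in F. \<forall>i<n. nn_hidden \<sigma> ds W B (X s) 0 i = u s i) \<and>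
           (\<forall>s i. n \<le> i \<longrightarrow> X s i = 0)"
      by (rule exI[of _ "\<lambda>s i. if i < n then u s i else 0"]) (use lim in auto)
  qed
next
  case (Suc m)
  show ?case
  proof (intro impI allI)
    fix u y
    assume dsn: "\<forall>k\<le>Suc m. ds ! k = n"
      and inv: "\<forall>k. 1 \<le> k \<longrightarrow> k \<le> Suc m \<longrightarrow> inv_pair n (W k) (Q k)"
      and lim: "\<forall>i<n. ((\<lambda>s. u s i) \<longlongrightarrow> nn_hidden \<sigma> ds W B y (Suc m) i) F"
    have IH: "\<forall>u y. (\<forall>i<n. ((\<lambda>s. u s i) \<longlongrightarrow> nn_hidden \<sigma> ds W B y m i) F) \<longrightarrow>
      (\<exists>X. (\<forall>i<n. ((\<lambda>s. X s i) \<longlongrightarrow> y i) F) \<and>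
           (\<forall>\<^sub>F s in F. \<forall>i<n. nn_hidden \<sigma> ds W B (X s) m i = u s i) \<and>
           (\<forall>s i. n \<le> i \<longrightarrow> X s i = 0))"
      using Suc.IH dsn inv by auto
    have dm: "ds ! m = n" "ds ! Suc m = n" using dsn by auto
    have ip: "inv_pair n (W (Suc m)) (Q (Suc m))" using inv by auto
    define t where "t l = (\<Sum>r<n. W (Suc m) l r * nn_hidden \<sigma> ds W B y m r) + B (Suc m) l" for l
    have Hy: "nn_hidden \<sigma> ds W B y (Suc m) l = \<sigma> (t l)" if "l < n" for l
      using that dm by (simp add: t_def)
    define u' where "u' s = (\<lambda>i. if i < n then (\<Sum>l<n. Q (Suc m) i l * (inv_into UNIV \<sigma> (u s l) - B (Suc m) l)) else 0)" for s
    have lim': "((\<lambda>s. u' s i) \<longlongrightarrow> nn_hidden \<sigma> ds W B y m i) F" if "i < n" for i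
    proof -
      have "((\<lambda>s. u' s i) \<longlongrightarrow> (\<Sum>l<n. Q (Suc m) i l * (t l - B (Suc m) l))) F"
        unfolding u'_def using that
        by (simp, intro tendsto_intros inv_lim[OF cont sm]) (use lim Hy in auto)
      also have "(\<Sum>l<n. Q (Suc m) i l * (t l - B (Suc m) l)) = nn_hidden \<sigma> ds W B y m i"
        unfolding t_def using ip that by (simp add: inv_pair_def inv_apply)
      finally show ?thesis .
    qed
    then obtain X where X1: "\<forall>i<n. ((\<lambda>s. X s i) \<longlongrightarrow> y i) F"
      and X2: "\<forall>\<^sub>F s in F. \<forall>i<n. nn_hidden \<sigma> ds W B (X s) m i = u' s i"
      and X3: "\<forall>s i. n \<le> i \<longrightarrow> X s i = 0"
      using IH by blast
    have R: "\<forall>\<^sub>F s in F. \<forall>l\<in>{..<n}. u s l \<in> range \<sigma>"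
    proof (rule eventually_ball_finite, simp, intro ballI)
      fix l assume "l \<in> {..<n}"
      then have "((\<lambda>s. u s l) \<longlongrightarrow> \<sigma> (t l)) F" using lim Hy by auto
      then show "\<forall>\<^sub>F s in F. u s l \<in> range \<sigma>" by (rule range_open[OF cont sm])
    qed
    have "\<forall>\<^sub>F s in F. \<forall>i<n. nn_hidden \<sigma> ds W B (X s) (Suc m) i = u s i"
      using eventually_conj[OF X2 R]
    proof (rule eventually_mono)
      fix s assume A: "(\<forall>i<n. nn_hidden \<sigma> ds W B (X s) m i = u' s i) \<and> (\<forall>l\<in>{..<n}. u s l \<in> range \<sigma>)"
      show "\<forall>i<n. nn_hidden \<sigma> ds W B (X s) (Suc m) i = u s i"
      proof (intro allI impI)
        fix i assume i: "i < n"
        have "nn_hidden \<sigma> ds W B (X s) (Suc m) i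
            = \<sigma> ((\<Sum>r<n. W (Suc m) i r * u' s r) + B (Suc m) i)"
          using i dm A by simp
        also have "(\<Sum>r<n. W (Suc m) i r * u' s r) = 
            (\<Sum>r<n. W (Suc m) i r * (\<Sum>l<n. Q (Suc m) r l * (inv_into UNIV \<sigma> (u s l) - B (Suc m) l)))"
          unfolding u'_def by (intro sum.cong) auto
        also have "\<dots> = inv_into UNIV \<sigma> (u s i) - B (Suc m) i"
          using inv_apply[where Q="W (Suc m)" and W="Q (Suc m)" and h="\<lambda>l. inv_into UNIV \<sigma> (u s l) - B (Suc m) l"] ip i
          by (simp add: inv_pair_def)
        finally show "nn_hidden \<sigma> ds W B (X s) (Suc m) i = u s i"
          using A i by (simp add: f_inv_into_f)
      qed
    qed
    then show "\<exists>X. (\<forall>i<n. ((\<lambda>s. X s i) \<longlongrightarrow> y i) F) \<and>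
           (\<forall>\<^sub>F s in F. \<forall>i<n. nn_hidden \<sigma> ds W B (X s) (Suc m) i = u s i) \<and>
           (\<forall>s i. n \<le> i \<longrightarrow> X s i = 0)"
      using X1 X3 by blast
  qed
qed



lemma H_cube_zero:
  assumes "\<forall>k\<le>m. ds ! k = n" "y \<in> cube a b n" "n \<le> i"
  shows "nn_hidden \<sigma> ds W B y m i = 0"
proof (cases m)
  case 0
  then show ?thesis using assms by (simp add: cube_def)
next
  case (Suc m')
  then show ?thesis using assms H_zero[of m ds i] by auto
qed

lemma geom:
  assumes cont: "continuous_on UNIV \<sigma>" and sm: "strict_mono_or_anti \<sigma>"
    and dsn: "\<forall>k\<le>m. ds ! k = n"
    and inv: "\<forall>k. 1 \<le> k \<longrightarrow> k \<le> m \<longrightarrow> inv_pair n (W k) (Q k)"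
    and i0: "i0 < n" "v i0 \<noteq> 0"
    and c: "c \<in> cube a b n"
  shows "\<exists>y\<in>cube a b n. (\<exists>i<n. y i = a \<or> y i = b) \<and>
           (\<exists>s. \<forall>i<n. nn_hidden \<sigma> ds W B y m i = nn_hidden \<sigma> ds W B c m i + s * v i)"
proof (rule ccontr)
  assume contra: "\<not> ?thesis"
  define hm where "hm y = nn_hidden \<sigma> ds W B y m" for y
  define p where "p = hm c"
  define z where "z s = (\<lambda>i. if i < n then p i + s * v i else 0)" for s
  define K where "K = hm ` cube a b n"
  have cK: "compact K" unfolding K_def hm_def
    by (intro compact_continuous_image cont_H_vec[OF cont] compact_cube)
  have zc: "continuous_on UNIV z" unfolding z_def
  proof (intro continuous_on_coordinatewise_then_product)
    fix i show "continuous_on UNIV (\<lambda>x. if i < n then p i + x * v i else 0)"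
      by (cases "i < n") (auto intro!: continuous_intros)
  qed
  have hz: "hm y = z s \<longleftrightarrow> (\<forall>i<n. hm y i = p i + s * v i)" if "y \<in> cube a b n" for y s
    using H_cube_zero[OF dsn that] unfolding z_def hm_def by (auto simp: fun_eq_iff)
  define S where "S = {s. 0 \<le> s \<and> z s \<in> K}"
  have "closed ({0..} \<inter> z -` K)"
  proof (intro closed_Int closed_atLeast continuous_closed_vimage compact_imp_closed cK allI)
    fix x show "isCont z x" using zc by (simp add: continuous_on_eq_continuous_at)
  qed
  moreover have "{0..} \<inter> z -` K = S" unfolding S_def by auto
  ultimately have clS: "closed S" by simp
  have "hm c = z 0" using hz[OF c, of 0] by (simp add: p_def)
  then have "z 0 \<in> K" unfolding K_def using c by (metis imageI)
  then have S0: "0 \<in> S" unfolding S_def by simp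
  have "compact ((\<lambda>w. w i0) ` K)"
    by (intro compact_continuous_image cK continuous_on_subset[OF continuous_on_product_coordinates]) auto
  then have "bounded ((\<lambda>w. w i0) ` K)" by (rule compact_imp_bounded)
  then obtain M where M0: "\<And>x. x \<in> (\<lambda>w. w i0) ` K \<Longrightarrow> \<bar>x\<bar> \<le> M"
    unfolding bounded_real by blast
  have M: "\<bar>w i0\<bar> \<le> M" if "w \<in> K" for w using M0 that by blast
  have bdd: "bdd_above S"
  proof (rule bdd_aboveI)
    fix s assume "s \<in> S"
    then have h1: "\<bar>p i0 + s * v i0\<bar> \<le> M" using M[of "z s"] i0 unfolding S_def z_def by auto
    have "\<bar>s * v i0\<bar> \<le> \<bar>p i0 + s * v i0\<bar> + \<bar>p i0\<bar>" by arith
    then have "\<bar>s\<bar> * \<bar>v i0\<bar> \<le> M + \<bar>p i0\<bar>" using h1 by (simp add: abs_mult)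
    moreover have "s * \<bar>v i0\<bar> \<le> \<bar>s\<bar> * \<bar>v i0\<bar>" by (simp add: mult_right_mono)
    ultimately have "s * \<bar>v i0\<bar> \<le> M + \<bar>p i0\<bar>" by linarith
    then show "s \<le> (M + \<bar>p i0\<bar>) / \<bar>v i0\<bar>" using i0 by (simp add: pos_le_divide_eq)
  qed
  define \<tau> where "\<tau> = Sup S"
  have tS: "\<tau> \<in> S" unfolding \<tau>_def using closed_contains_Sup[OF _ bdd clS] S0 by auto
  then obtain y where y: "y \<in> cube a b n" "hm y = z \<tau>" unfolding S_def K_def by auto
  have hy: "\<forall>i<n. nn_hidden \<sigma> ds W B y m i = nn_hidden \<sigma> ds W B c m i + \<tau> * v i"
    using hz[OF y(1), of \<tau>] y(2) unfolding hm_def p_def by simp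
  have yint: "a < y i \<and> y i < b" if "i < n" for i
  proof -
    have "\<not> (y i = a \<or> y i = b)"
    proof
      assume "y i = a \<or> y i = b"
      then have "\<exists>y\<in>cube a b n. (\<exists>i<n. y i = a \<or> y i = b) \<and>
           (\<exists>s. \<forall>i<n. nn_hidden \<sigma> ds W B y m i = nn_hidden \<sigma> ds W B c m i + s * v i)"
        by (intro bexI[of _ y] conjI exI[of _ \<tau>]) (use y(1) hy that \<open>y i = a \<or> y i = b\<close> in auto)
      then show False using contra by simp
    qed
    moreover have "a \<le> y i" "y i \<le> b" using y(1) that unfolding cube_def by auto
    ultimately show ?thesis by linarith
  qed
  have lim: "\<forall>i<n. ((\<lambda>s. z s i) \<longlongrightarrow> hm y i) (at_right \<tau>)"
    using y(2) unfolding z_def by (auto intro!: tendsto_intros)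
  have "\<exists>X. (\<forall>i<n. ((\<lambda>s. X s i) \<longlongrightarrow> y i) (at_right \<tau>)) \<and>
           (\<forall>\<^sub>F s in at_right \<tau>. \<forall>i<n. nn_hidden \<sigma> ds W B (X s) m i = z s i) \<and>
           (\<forall>s i. n \<le> i \<longrightarrow> X s i = 0)"
  proof -
    have L: "\<forall>u y. (\<forall>i<n. ((\<lambda>s. u s i) \<longlongrightarrow> nn_hidden \<sigma> ds W B y m i) (at_right \<tau>)) \<longrightarrow>
      (\<exists>X. (\<forall>i<n. ((\<lambda>s. X s i) \<longlongrightarrow> y i) (at_right \<tau>)) \<and>
           (\<forall>\<^sub>F s in at_right \<tau>. \<forall>i<n. nn_hidden \<sigma> ds W B (X s) m i = u s i) \<and>
           (\<forall>s i. n \<le> i \<longrightarrow> X s i = 0))"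
      by (rule local_surj[OF cont sm, of m ds n W Q B "at_right \<tau>", THEN mp, THEN mp, OF dsn inv])
    have lim': "\<forall>i<n. ((\<lambda>s. z s i) \<longlongrightarrow> nn_hidden \<sigma> ds W B y m i) (at_right \<tau>)"
      using lim unfolding hm_def .
    show ?thesis by (rule mp[OF spec[OF spec[OF L, of z], of y] lim'])
  qed
  then obtain X where X1: "\<forall>i<n. ((\<lambda>s. X s i) \<longlongrightarrow> y i) (at_right \<tau>)"
    and X2': "\<forall>\<^sub>F s in at_right \<tau>. \<forall>i<n. nn_hidden \<sigma> ds W B (X s) m i = z s i"
    and X3: "\<forall>s i. n \<le> i \<longrightarrow> X s i = 0"
    by blast
  have X2: "\<forall>\<^sub>F s in at_right \<tau>. \<forall>i<n. hm (X s) i = z s i"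
    using X2' unfolding hm_def .
  have Xc: "\<forall>\<^sub>F s in at_right \<tau>. \<forall>i\<in>{..<n}. a < X s i \<and> X s i < b"
  proof (rule eventually_ball_finite, simp, intro ballI)
    fix i assume "i \<in> {..<n}"
    then have "((\<lambda>s. X s i) \<longlongrightarrow> y i) (at_right \<tau>)" "a < y i" "y i < b" using X1 yint by auto
    then show "\<forall>\<^sub>F s in at_right \<tau>. a < X s i \<and> X s i < b"
      by (auto intro: eventually_conj order_tendstoD)
  qed
  have ev: "\<forall>\<^sub>F s in at_right \<tau>. z s \<in> K \<and> \<tau> < s"
    using eventually_conj[OF eventually_conj[OF X2 Xc] eventually_at_right_less[of \<tau>]]
  proof (rule eventually_mono)
    fix s assume A: "((\<forall>i<n. hm (X s) i = z s i) \<and> (\<forall>i\<in>{..<n}. a < X s i \<and> X s i < b)) \<and> \<tau> < s"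
    then have Xs: "X s \<in> cube a b n" using X3 unfolding cube_def by (auto intro: less_imp_le)
    then have "hm (X s) = z s" using hz[OF Xs, of s] A unfolding z_def by auto
    then have "z s \<in> K" unfolding K_def using Xs by (metis imageI)
    then show "z s \<in> K \<and> \<tau> < s" using A by simp
  qed
  obtain s where "z s \<in> K" "\<tau> < s"
    using eventually_happens[OF ev] trivial_limit_at_right_real by auto
  then have "s \<in> S" "\<tau> < s" using tS unfolding S_def by auto
  moreover have "s \<le> Sup S" by (rule cSup_upper[OF _ bdd]) fact
  ultimately show False unfolding \<tau>_def by linarith
qed



definition padm :: "nat \<Rightarrow> nat \<Rightarrow> (nat \<Rightarrow> nat \<Rightarrow> real) \<Rightarrow> real Matrix.mat" where
  "padm n d P = Matrix.mat n n (\<lambda>(i,l). if i < d then P i l else 0)"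

lemma padm_carrier: "padm n d P \<in> carrier_mat n n"
  unfolding padm_def by simp

lemma padm_zero_det:
  assumes "d < n" shows "Determinant.det (padm n d P) = 0"
proof -
  let ?A = "padm n d P"
  have k: "n - 1 < n" using assms by simp
  have "multrow (n - 1) 0 ?A = ?A"
    by (rule eq_matI) (use assms in \<open>auto simp: mat_multrow_gen_def padm_def\<close>)
  then show ?thesis using det_multrow[OF k padm_carrier, of 0 d P] by simp
qed

lemma padm_inv:
  assumes "Determinant.det (padm n n P) \<noteq> 0"
  shows "\<exists>Q. inv_pair n P Q"
proof -
  let ?A = "padm n n P"
  have "?A \<in> Units (ring_mat TYPE(real) n ())"
    by (rule det_non_zero_imp_unit[OF padm_carrier assms])
  then obtain B where B: "B \<in> carrier_mat n n" and AB: "?A * B = 1\<^sub>m n" and BA: "B * ?A = 1\<^sub>m n"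
    unfolding Units_def ring_mat_def by auto
  define Q where "Q i l = B $$ (i,l)" for i l
  have 1: "(\<Sum>t<n. P i t * Q t l) = (if i = l then 1 else 0)" if "i < n" "l < n" for i l
  proof -
    have "(?A * B) $$ (i,l) = (\<Sum>t<n. P i t * Q t l)"
      using that B by (simp add: padm_def Q_def scalar_prod_def lessThan_atLeast0)
    then show ?thesis using AB that by simp
  qed
  have 2: "(\<Sum>t<n. Q i t * P t l) = (if i = l then 1 else 0)" if "i < n" "l < n" for i l
  proof -
    have "(B * ?A) $$ (i,l) = (\<Sum>t<n. Q i t * P t l)"
      using that B by (simp add: padm_def Q_def scalar_prod_def lessThan_atLeast0)
    then show ?thesis using BA that by simp
  qed
  show ?thesis using 1 2 unfolding inv_pair_def by blast
qed

lemma padm_ker: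
  assumes "Determinant.det (padm n d P) = 0" "d \<le> n"
  shows "\<exists>v. (\<exists>i0<n. v i0 \<noteq> 0) \<and> (\<forall>i<d. (\<Sum>l<n. P i l * v l) = 0)"
proof -
  obtain v where v: "v \<in> carrier_vec n" "v \<noteq> 0\<^sub>v n" "padm n d P *\<^sub>v v = 0\<^sub>v n"
    using det_0_iff_vec_prod_zero[OF padm_carrier] assms(1) by blast
  have "\<exists>i0<n. v $ i0 \<noteq> 0"
  proof (rule ccontr)
    assume "\<not> ?thesis"
    then have "v = 0\<^sub>v n" using v(1) by (intro eq_vecI) auto
    then show False using v(2) by simp
  qed
  moreover have "(\<Sum>l<n. P i l * v $ l) = 0" if "i < d" for i
  proof -
    have "(padm n d P *\<^sub>v v) $ i = (\<Sum>l<n. P i l * v $ l)"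
      using that assms(2) v(1) by (simp add: padm_def scalar_prod_def lessThan_atLeast0)
    then show ?thesis using v(3) that assms(2) by simp
  qed
  ultimately show ?thesis by (intro exI[of _ "\<lambda>l. v $ l"]) auto
qed



lemma H_prop:
  assumes "nn_hidden \<sigma> ds W B x j = nn_hidden \<sigma> ds W B y j" "j \<le> k"
  shows "nn_hidden \<sigma> ds W B x k = nn_hidden \<sigma> ds W B y k"
  using assms(2)
proof (induction k rule: dec_induct)
  case base then show ?case using assms(1) by simp
next
  case (step k) then show ?case by (simp add: fun_eq_iff)
qed

lemma eval_eq:
  assumes "nn_hidden \<sigma> ds W B x (length ds - 2) = nn_hidden \<sigma> ds W B y (length ds - 2)"
  shows "nn_eval \<sigma> ds W B x = nn_eval \<sigma> ds W B y"
proof -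
  have e: "length ds - 1 - 1 = length ds - 2" by simp
  show ?thesis unfolding nn_eval_def Let_def e assms by (rule refl)
qed

lemma sum_two:
  fixes w :: "nat \<Rightarrow> real"
  assumes "2 \<le> n"
  shows "(\<Sum>l<n. w l * (if l = 0 then p else if l = 1 then q else 0)) = w 0 * p + w 1 * q"
proof -
  have "(\<Sum>l<n. w l * (if l = 0 then p else if l = 1 then q else 0))
      = (\<Sum>l<n. (if l = 0 then w 0 * p else 0) + (if l = 1 then w 1 * q else 0))"
    by (intro sum.cong) auto
  also have "\<dots> = w 0 * p + w 1 * q" using assms by (simp add: sum.distrib)
  finally show ?thesis .
qed

lemma core_eq:
  assumes cont: "continuous_on UNIV \<sigma>" and sm: "strict_mono_or_anti \<sigma>"
    and n2: "2 \<le> n"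
    and len: "2 \<le> length ds" and d0: "ds ! 0 = n"
    and wid: "\<forall>k. 1 \<le> k \<longrightarrow> k < length ds \<longrightarrow> 0 < ds ! k \<and> ds ! k \<le> n"
    and c: "c \<in> cube a b n"
  shows "\<exists>y\<in>cube a b n. (\<exists>i<n. y i = a \<or> y i = b) \<and> nn_eval \<sigma> ds W B y 0 = nn_eval \<sigma> ds W B c 0"
proof -
  define L where "L = length ds - 1"
  have L1: "1 \<le> L" using len unfolding L_def by simp
  define G where "G = {k. 1 \<le> k \<and> k < L \<and> Determinant.det (padm n (ds ! k) (W k)) = 0}"
  have good: "ds ! k = n \<and> (\<exists>Q. inv_pair n (W k) Q)"
    if "1 \<le> k" "k < L" "k \<notin> G" for k
  proof -
    have dk: "Determinant.det (padm n (ds ! k) (W k)) \<noteq> 0" using that unfolding G_def by auto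
    have "ds ! k \<le> n" using wid that unfolding L_def by auto
    moreover have "\<not> ds ! k < n" using padm_zero_det dk by blast
    ultimately have "ds ! k = n" by simp
    then show ?thesis using padm_inv dk by auto
  qed
  define j where "j = (if G = {} then L else Min G)"
  have fG: "finite G" unfolding G_def by auto
  have j1': "1 \<le> j \<and> j \<le> L"
  proof (cases "G = {}")
    case True then show ?thesis using L1 unfolding j_def by simp
  next
    case False
    then have "Min G \<in> G" using Min_in[OF fG] by blast
    then have "1 \<le> Min G \<and> Min G < L" unfolding G_def by blast
    then show ?thesis using False unfolding j_def by simp
  qed
  then have j1: "1 \<le> j" "j \<le> L" by auto
  have below: "k \<notin> G" if "k < j" for k
  proof
    assume kG: "k \<in> G"
    then have "G \<noteq> {}" by blast
    then have "j = Min G" unfolding j_def by simp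
    then show False using Min_le[OF fG kG] that by simp
  qed
  define m where "m = j - 1"
  have jm: "j = Suc m" using j1 unfolding m_def by simp
  have dsn: "\<forall>k\<le>m. ds ! k = n"
  proof (intro allI impI)
    fix k assume "k \<le> m"
    then show "ds ! k = n" using d0 good[of k] below[of k] jm j1 by (cases "k = 0") auto
  qed
  have "\<forall>k. \<exists>Q. 1 \<le> k \<longrightarrow> k \<le> m \<longrightarrow> inv_pair n (W k) Q"
  proof
    fix k show "\<exists>Q. 1 \<le> k \<longrightarrow> k \<le> m \<longrightarrow> inv_pair n (W k) Q"
    proof (cases "1 \<le> k \<and> k \<le> m")
      case True
      then have "1 \<le> k" "k < L" "k \<notin> G" using below jm j1 by auto
      then obtain Q where "inv_pair n (W k) Q" using good by blast
      then show ?thesis by blast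
    qed blast
  qed
  from choice[OF this] obtain Q where inv: "\<forall>k. 1 \<le> k \<longrightarrow> k \<le> m \<longrightarrow> inv_pair n (W k) (Q k)"
    by blast
  have dm: "ds ! m = n" using dsn by simp
  show ?thesis
  proof (cases "G = {}")
    case True
    then have jL: "j = L" unfolding j_def by simp
    define v :: "nat \<Rightarrow> real" where "v = (if W L 0 0 = 0 then (\<lambda>i. if i = 0 then 1 else if i = 1 then 0 else 0)
                         else (\<lambda>i. if i = 0 then W L 0 1 else if i = 1 then - W L 0 0 else 0::real))"
    have v0: "v 0 \<noteq> 0 \<or> v 1 \<noteq> 0" unfolding v_def by auto
    have "\<exists>i0<n. v i0 \<noteq> 0"
    proof (cases "v 0 \<noteq> 0")
      case True then show ?thesis using n2 by (intro exI[of _ 0]) auto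
    next
      case False then show ?thesis using n2 v0 by (intro exI[of _ 1]) auto
    qed
    then obtain i0 where i0: "i0 < n" "v i0 \<noteq> 0" by blast
    have vker: "(\<Sum>l<n. W L 0 l * v l) = 0"
      unfolding v_def using sum_two[OF n2, of "W L 0"] by (auto simp: algebra_simps)
    obtain y s where y: "y \<in> cube a b n" "\<exists>i<n. y i = a \<or> y i = b"
      "\<forall>i<n. nn_hidden \<sigma> ds W B y m i = nn_hidden \<sigma> ds W B c m i + s * v i"
      using geom[where v=v and B=B, OF cont sm dsn inv i0 c] by blast
    have mL: "m = L - 1" using jL jm by simp
    have "nn_eval \<sigma> ds W B y 0 - nn_eval \<sigma> ds W B c 0
        = (\<Sum>k<n. W L 0 k * (nn_hidden \<sigma> ds W B y m k - nn_hidden \<sigma> ds W B c m k))"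
      using wid len dm mL unfolding nn_eval_def Let_def L_def[symmetric]
      by (simp add: sum_subtractf algebra_simps L_def)
    also have "\<dots> = (\<Sum>k<n. s * (W L 0 k * v k))"
      using y(3) by (intro sum.cong) auto
    also have "\<dots> = 0" using vker by (simp add: sum_distrib_left[symmetric])
    finally show ?thesis using y by auto
  next
    case False
    then have jG: "j \<in> G" unfolding j_def using Min_in[OF fG] by simp
    then have jL: "j < L" and dj: "Determinant.det (padm n (ds ! j) (W j)) = 0" unfolding G_def by auto
    have "ds ! j \<le> n" using wid j1 jL unfolding L_def by auto
    then obtain v where v: "\<exists>i0<n. v i0 \<noteq> 0" "\<forall>i<ds ! j. (\<Sum>l<n. W j i l * v l) = 0"
      using padm_ker[OF dj] by blast
    then obtain i0 where i0: "i0 < n" "v i0 \<noteq> 0" by blast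
    obtain y s where y: "y \<in> cube a b n" "\<exists>i<n. y i = a \<or> y i = b"
      "\<forall>i<n. nn_hidden \<sigma> ds W B y m i = nn_hidden \<sigma> ds W B c m i + s * v i"
      using geom[where v=v and B=B, OF cont sm dsn inv i0 c] by blast
    have Hj: "nn_hidden \<sigma> ds W B y j = nn_hidden \<sigma> ds W B c j"
    proof
      fix i
      show "nn_hidden \<sigma> ds W B y j i = nn_hidden \<sigma> ds W B c j i"
      proof (cases "i < ds ! j")
        case True
        have "(\<Sum>k<n. W j i k * nn_hidden \<sigma> ds W B y m k) = (\<Sum>k<n. W j i k * nn_hidden \<sigma> ds W B c m k + s * (W j i k * v k))"
          using y(3) by (intro sum.cong) (auto simp: algebra_simps)
        also have "\<dots> = (\<Sum>k<n. W j i k * nn_hidden \<sigma> ds W B c m k)"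
          using v(2) True by (simp add: sum.distrib sum_distrib_left[symmetric])
        finally show ?thesis using True dm by (simp add: jm)
      next
        case False
        then show ?thesis by (simp add: jm)
      qed
    qed
    have "nn_hidden \<sigma> ds W B y (length ds - 2) = nn_hidden \<sigma> ds W B c (length ds - 2)"
      by (rule H_prop[OF Hj]) (use jL in \<open>simp add: L_def\<close>)
    then show ?thesis using eval_eq y by metis
  qed
qed



definition MA :: "real \<Rightarrow> real \<Rightarrow> ((nat \<Rightarrow> real) \<Rightarrow> real) \<Rightarrow> bool" where
  "MA a b g \<longleftrightarrow> (\<forall>x\<in>cube a b 1. \<forall>y\<in>cube a b 1. x 0 \<le> y 0 \<longrightarrow> g x \<le> g y)
     \<or> (\<forall>x\<in>cube a b 1. \<forall>y\<in>cube a b 1. x 0 \<le> y 0 \<longrightarrow> g y \<le> g x)"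

definition MO :: "(real \<Rightarrow> real) \<Rightarrow> bool" where
  "MO h \<longleftrightarrow> (\<forall>s t. s \<le> t \<longrightarrow> h s \<le> h t) \<or> (\<forall>s t. s \<le> t \<longrightarrow> h t \<le> h s)"

lemma MA_comp: "MA a b g \<Longrightarrow> MO h \<Longrightarrow> MA a b (\<lambda>x. h (g x))"
  unfolding MA_def MO_def by (elim disjE) (metis, metis, metis, metis)

lemma MO_affine: "MO (\<lambda>t. w * t + c)"
  unfolding MO_def
proof (cases "0 \<le> w")
  case True then show "(\<forall>s t. s \<le> t \<longrightarrow> w * s + c \<le> w * t + c) \<or> (\<forall>s t. s \<le> t \<longrightarrow> w * t + c \<le> w * s + c)"
    by (auto intro: mult_left_mono)
next
  case False then show "(\<forall>s t. s \<le> t \<longrightarrow> w * s + c \<le> w * t + c) \<or> (\<forall>s t. s \<le> t \<longrightarrow> w * t + c \<le> w * s + c)"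
    by (auto intro: mult_left_mono_neg)
qed

lemma smoa_MO: "strict_mono_or_anti \<sigma> \<Longrightarrow> MO \<sigma>"
  unfolding strict_mono_or_anti_def MO_def by (metis order_le_less)

lemma core_one:
  assumes mo: "MO \<sigma>"
    and len: "2 \<le> length ds" and d0: "ds ! 0 = 1"
    and wid: "\<forall>k. 1 \<le> k \<longrightarrow> k < length ds \<longrightarrow> 0 < ds ! k \<and> ds ! k \<le> 1"
    and c: "c \<in> cube a b 1"
  shows "\<exists>y\<in>cube a b 1. (y 0 = a \<or> y 0 = b) \<and> nn_eval \<sigma> ds W B c 0 \<le> nn_eval \<sigma> ds W B y 0"
proof -
  have ab: "a \<le> b" using c unfolding cube_def by auto
  have d1: "ds ! k = 1" if "k < length ds" for k
  proof (cases "k = 0")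
    case True then show ?thesis using d0 by simp
  next
    case False
    then have "0 < ds ! k \<and> ds ! k \<le> 1" using wid that by auto
    then show ?thesis by simp
  qed
  have H: "MA a b (\<lambda>x. nn_hidden \<sigma> ds W B x k 0)" if "k < length ds" for k
    using that
  proof (induction k)
    case 0 then show ?case unfolding MA_def by auto
  next
    case (Suc k)
    have e: "nn_hidden \<sigma> ds W B x (Suc k) 0 = \<sigma> (W (Suc k) 0 0 * nn_hidden \<sigma> ds W B x k 0 + B (Suc k) 0)" for x
      using d1[of k] d1[of "Suc k"] Suc.prems by simp
    have "MA a b (\<lambda>x. \<sigma> (W (Suc k) 0 0 * nn_hidden \<sigma> ds W B x k 0 + B (Suc k) 0))"
      by (rule MA_comp[OF MA_comp[OF Suc.IH MO_affine] mo]) (use Suc.prems in simp)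
    then show ?case unfolding e .
  qed
  define L where "L = length ds - 1"
  have eF: "nn_eval \<sigma> ds W B x 0 = W L 0 0 * nn_hidden \<sigma> ds W B x (L - 1) 0 + 0" for x
    using d1[of L] d1[of "L - 1"] len unfolding nn_eval_def Let_def L_def by simp
  have "MA a b (\<lambda>x. W L 0 0 * nn_hidden \<sigma> ds W B x (L - 1) 0 + 0)"
    by (rule MA_comp[OF H MO_affine]) (use len in \<open>simp add: L_def\<close>)
  then have MF: "MA a b (\<lambda>x. nn_eval \<sigma> ds W B x 0)" unfolding eF .
  define ya where "ya = (\<lambda>i::nat. if i = 0 then a else 0)"
  define yb where "yb = (\<lambda>i::nat. if i = 0 then b else 0)"
  have yab: "ya \<in> cube a b 1" "yb \<in> cube a b 1" using ab unfolding ya_def yb_def cube_def by auto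
  have c0: "ya 0 \<le> c 0" "c 0 \<le> yb 0" using c unfolding ya_def yb_def cube_def by auto
  from MF show ?thesis unfolding MA_def
  proof (elim disjE)
    assume "\<forall>x\<in>cube a b 1. \<forall>y\<in>cube a b 1. x 0 \<le> y 0 \<longrightarrow> nn_eval \<sigma> ds W B x 0 \<le> nn_eval \<sigma> ds W B y 0"
    then show ?thesis using yab c c0 by (intro bexI[of _ yb]) (auto simp: yb_def)
  next
    assume "\<forall>x\<in>cube a b 1. \<forall>y\<in>cube a b 1. x 0 \<le> y 0 \<longrightarrow> nn_eval \<sigma> ds W B y 0 \<le> nn_eval \<sigma> ds W B x 0"
    then show ?thesis using yab c c0 by (intro bexI[of _ ya]) (auto simp: ya_def)
  qed
qed

lemma core:
  assumes cont: "continuous_on UNIV \<sigma>" and sm: "strict_mono_or_anti \<sigma>"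
    and n1: "1 \<le> n"
    and len: "2 \<le> length ds" and d0: "ds ! 0 = n"
    and wid: "\<forall>k. 1 \<le> k \<longrightarrow> k < length ds \<longrightarrow> 0 < ds ! k \<and> ds ! k \<le> n"
    and c: "c \<in> cube a b n"
  shows "\<exists>y\<in>cube a b n. (\<exists>i<n. y i = a \<or> y i = b) \<and> nn_eval \<sigma> ds W B c 0 \<le> nn_eval \<sigma> ds W B y 0"
proof (cases "n = 1")
  case True
  have d0': "ds ! 0 = 1" and wid': "\<forall>k. 1 \<le> k \<longrightarrow> k < length ds \<longrightarrow> 0 < ds ! k \<and> ds ! k \<le> 1"
    and c': "c \<in> cube a b 1" using d0 wid c True by auto
  obtain y where "y \<in> cube a b 1" "y 0 = a \<or> y 0 = b" "nn_eval \<sigma> ds W B c 0 \<le> nn_eval \<sigma> ds W B y 0"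
    using core_one[OF smoa_MO[OF sm] len d0' wid' c', where W=W and B=B] by blast
  then show ?thesis using True by auto
next
  case False
  then have "2 \<le> n" using n1 by simp
  from core_eq[OF cont sm this len d0 wid c, of W B] show ?thesis by force
qed



definition leaky :: "real \<Rightarrow> real \<Rightarrow> real" where
  "leaky \<delta> t = max t (\<delta> * t)"

lemma leaky_pos: "0 < \<delta> \<Longrightarrow> \<delta> < 1 \<Longrightarrow> 0 \<le> s \<Longrightarrow> leaky \<delta> s = s"
  unfolding leaky_def using mult_right_mono[of \<delta> 1 s] by auto

lemma leaky_neg: "0 < \<delta> \<Longrightarrow> \<delta> < 1 \<Longrightarrow> s < 0 \<Longrightarrow> leaky \<delta> s = \<delta> * s \<and> s \<le> \<delta> * s \<and> \<delta> * s \<le> 0"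
  unfolding leaky_def using mult_right_mono_neg[of \<delta> 1 s] mult_pos_neg[of \<delta> s] by auto

lemma leaky_strict: "0 < \<delta> \<Longrightarrow> \<delta> < 1 \<Longrightarrow> strict_mono_or_anti (leaky \<delta>)"
  unfolding strict_mono_or_anti_def
proof (intro disjI1 allI impI)
  fix s t :: real assume d: "0 < \<delta>" "\<delta> < 1" and st: "s < t"
  show "leaky \<delta> s < leaky \<delta> t"
  proof (cases "0 \<le> s")
    case True then show ?thesis using leaky_pos[OF d] st by simp
  next
    case False
    then have ls: "leaky \<delta> s = \<delta> * s" "\<delta> * s < 0" using leaky_neg[OF d, of s] mult_pos_neg[of \<delta> s] d by auto
    show ?thesis
    proof (cases "0 \<le> t")
      case True then show ?thesis using leaky_pos[OF d True] ls by simp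
    next
      case False
      then have "leaky \<delta> t = \<delta> * t" using leaky_neg[OF d, of t] by auto
      then show ?thesis using ls st d by (simp add: mult_strict_left_mono)
    qed
  qed
qed

lemma leaky_cont: "continuous_on UNIV (leaky \<delta>)"
  unfolding leaky_def by (intro continuous_intros)

lemma relu_cont: "continuous_on UNIV (\<lambda>t::real. max t 0)"
  by (intro continuous_intros)

lemma leaky_relu_diff:
  assumes "0 < \<delta>" "\<delta> < 1"
  shows "\<bar>leaky \<delta> s - max t 0\<bar> \<le> \<bar>s - t\<bar> + \<delta> * \<bar>t\<bar>"
proof (cases "0 \<le> s")
  case True
  then have "leaky \<delta> s = s" using leaky_pos assms by blast
  moreover have "0 \<le> \<delta> * \<bar>t\<bar>" using assms by simp
  ultimately show ?thesis using True by (auto simp: max_def)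
next
  case False
  then have L: "leaky \<delta> s = \<delta> * s" "s \<le> \<delta> * s" "\<delta> * s \<le> 0" using leaky_neg assms by auto
  show ?thesis
  proof (cases "0 \<le> t")
    case True
    have "0 \<le> \<delta> * t" using assms True by simp
    moreover have "\<bar>leaky \<delta> s - max t 0\<bar> = t - \<delta> * s" using L True by (simp add: max_def)
    moreover have "\<bar>s - t\<bar> = t - s" using False True by simp
    moreover have "\<bar>t\<bar> = t" using True by simp
    ultimately show ?thesis using L by linarith
  next
    case tneg: False
    have a1: "\<bar>\<delta> * (s - t)\<bar> \<le> \<bar>s - t\<bar>"
      using assms by (simp add: abs_mult mult_left_le_one_le)
    have a2: "\<delta> * (s - t) = \<delta> * s - \<delta> * t" by (simp add: algebra_simps)
    have a3: "\<delta> * \<bar>t\<bar> = - (\<delta> * t)" using tneg by simp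
    show ?thesis using L a1 a2 a3 tneg False by (auto simp: max_def)
  qed
qed

lemma sum_diff_bound:
  fixes w p q :: "nat \<Rightarrow> real"
  assumes "\<forall>l<d. \<bar>p l - q l\<bar> \<le> e"
  shows "\<bar>(\<Sum>l<d. w l * p l) - (\<Sum>l<d. w l * q l)\<bar> \<le> (\<Sum>l<d. \<bar>w l\<bar>) * e"
proof -
  have "\<bar>(\<Sum>l<d. w l * p l) - (\<Sum>l<d. w l * q l)\<bar> = \<bar>\<Sum>l<d. w l * (p l - q l)\<bar>"
    by (simp add: sum_subtractf algebra_simps)
  also have "\<dots> \<le> (\<Sum>l<d. \<bar>w l * (p l - q l)\<bar>)" by (rule sum_abs)
  also have "\<dots> \<le> (\<Sum>l<d. \<bar>w l\<bar> * e)"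
    using assms by (intro sum_mono) (auto simp: abs_mult intro: mult_left_mono)
  finally show ?thesis by (simp add: sum_distrib_right)
qed

lemma sum_bound:
  fixes w p :: "nat \<Rightarrow> real"
  assumes "\<forall>l<d. \<bar>p l\<bar> \<le> e"
  shows "\<bar>\<Sum>l<d. w l * p l\<bar> \<le> (\<Sum>l<d. \<bar>w l\<bar>) * e"
  using sum_diff_bound[of d p "\<lambda>_. 0" e w] assms by simp

lemma row_le: "i < d' \<Longrightarrow> (\<Sum>l<d. \<bar>(W::nat\<Rightarrow>nat\<Rightarrow>real) i l\<bar>) \<le> (\<Sum>i<d'. \<Sum>l<d. \<bar>W i l\<bar>)"
  by (rule member_le_sum[where f="\<lambda>i. \<Sum>l<d. \<bar>W i l\<bar>"]) (auto intro: sum_nonneg)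

lemma hidden_approx:
  "\<exists>C M. 0 \<le> C \<and> 0 \<le> M \<and> (\<forall>\<delta> x i. 0 < \<delta> \<longrightarrow> \<delta> < 1 \<longrightarrow> x \<in> cube a b n \<longrightarrow>
     \<bar>nn_hidden (leaky \<delta>) ds W B x k i - nn_hidden (\<lambda>t. max t 0) ds W B x k i\<bar> \<le> \<delta> * C
     \<and> \<bar>nn_hidden (\<lambda>t. max t 0) ds W B x k i\<bar> \<le> M)"
proof (induction k)
  case 0
  have "\<bar>x i\<bar> \<le> \<bar>a\<bar> + \<bar>b\<bar>" if "x \<in> cube a b n" for x :: "nat \<Rightarrow> real" and i
    using that unfolding cube_def by (cases "i < n") auto
  then show ?case by (intro exI[of _ 0] exI[of _ "\<bar>a\<bar> + \<bar>b\<bar>"]) auto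
next
  case (Suc k)
  then obtain C M where CM: "0 \<le> C" "0 \<le> M" and
    IH: "\<And>\<delta> x i. 0 < \<delta> \<Longrightarrow> \<delta> < 1 \<Longrightarrow> x \<in> cube a b n \<Longrightarrow>
     \<bar>nn_hidden (leaky \<delta>) ds W B x k i - nn_hidden (\<lambda>t. max t 0) ds W B x k i\<bar> \<le> \<delta> * C
     \<and> \<bar>nn_hidden (\<lambda>t. max t 0) ds W B x k i\<bar> \<le> M" by blast
  define d where "d = ds ! k"
  define d' where "d' = ds ! Suc k"
  define R where "R = (\<Sum>i<d'. \<Sum>l<d. \<bar>W (Suc k) i l\<bar>)"
  define SB where "SB = (\<Sum>i<d'. \<bar>B (Suc k) i\<bar>)"
  have R0: "0 \<le> R" unfolding R_def by (intro sum_nonneg) auto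
  have SB0: "0 \<le> SB" unfolding SB_def by (intro sum_nonneg) auto
  have nn: "0 \<le> R * C + R * M + SB" "0 \<le> R * M + SB" using R0 SB0 CM by auto
  have P: "\<forall>\<delta> x i. 0 < \<delta> \<longrightarrow> \<delta> < 1 \<longrightarrow> x \<in> cube a b n \<longrightarrow>
     \<bar>nn_hidden (leaky \<delta>) ds W B x (Suc k) i - nn_hidden (\<lambda>t. max t 0) ds W B x (Suc k) i\<bar> \<le> \<delta> * (R * C + R * M + SB)
     \<and> \<bar>nn_hidden (\<lambda>t. max t 0) ds W B x (Suc k) i\<bar> \<le> R * M + SB"
    proof (intro allI impI)
    fix \<delta> :: real and x :: "nat \<Rightarrow> real" and i :: nat assume \<delta>: "0 < \<delta>" "\<delta> < 1" and x: "x \<in> cube a b n"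
    define hd where "hd = nn_hidden (leaky \<delta>) ds W B x k"
    define h where "h = nn_hidden (\<lambda>t. max t 0) ds W B x k"
    define s where "s = (\<Sum>l<d. W (Suc k) i l * hd l) + B (Suc k) i"
    define t where "t = (\<Sum>l<d. W (Suc k) i l * h l) + B (Suc k) i"
    have "\<bar>nn_hidden (leaky \<delta>) ds W B x (Suc k) i - nn_hidden (\<lambda>t. max t 0) ds W B x (Suc k) i\<bar> \<le> \<delta> * (R * C + R * M + SB)
      \<and> \<bar>nn_hidden (\<lambda>t. max t 0) ds W B x (Suc k) i\<bar> \<le> R * M + SB"
    proof (cases "i < d'")
      case True
      have rl: "(\<Sum>l<d. \<bar>W (Suc k) i l\<bar>) \<le> R" unfolding R_def by (rule row_le[OF True])
      have bl: "\<bar>B (Suc k) i\<bar> \<le> SB" unfolding SB_def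
        by (rule member_le_sum[where f="\<lambda>i. \<bar>B (Suc k) i\<bar>"]) (use True in auto)
      have e1: "\<forall>l<d. \<bar>hd l - h l\<bar> \<le> \<delta> * C" using IH[OF \<delta> x] unfolding hd_def h_def by blast
      have e2: "\<forall>l<d. \<bar>h l\<bar> \<le> M" using IH[OF \<delta> x] unfolding h_def by blast
      have "\<bar>s - t\<bar> \<le> (\<Sum>l<d. \<bar>W (Suc k) i l\<bar>) * (\<delta> * C)"
        unfolding s_def t_def using sum_diff_bound[OF e1, of "W (Suc k) i"] by simp
      also have "\<dots> \<le> R * (\<delta> * C)" using rl \<delta> CM by (intro mult_right_mono) auto
      finally have st: "\<bar>s - t\<bar> \<le> \<delta> * (R * C)" by (simp add: algebra_simps)
      have "\<bar>\<Sum>l<d. W (Suc k) i l * h l\<bar> \<le> (\<Sum>l<d. \<bar>W (Suc k) i l\<bar>) * M"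
        by (rule sum_bound[OF e2])
      also have "\<dots> \<le> R * M" using rl CM by (intro mult_right_mono) auto
      finally have tb: "\<bar>t\<bar> \<le> R * M + SB" unfolding t_def using bl by linarith
      have "\<bar>leaky \<delta> s - max t 0\<bar> \<le> \<bar>s - t\<bar> + \<delta> * \<bar>t\<bar>" by (rule leaky_relu_diff[OF \<delta>])
      also have "\<dots> \<le> \<delta> * (R * C) + \<delta> * (R * M + SB)"
        using st tb \<delta> by (intro add_mono mult_left_mono) auto
      finally have A: "\<bar>leaky \<delta> s - max t 0\<bar> \<le> \<delta> * (R * C + R * M + SB)" by (simp add: algebra_simps)
      have B: "\<bar>max t 0\<bar> \<le> R * M + SB" using tb by auto
      show ?thesis using A B True
        by (simp add: d'_def[symmetric] d_def[symmetric] s_def[symmetric] t_def[symmetric] hd_def[symmetric] h_def[symmetric])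
    next
      case False
      then show ?thesis using R0 SB0 CM \<delta> by (simp add: d'_def)
    qed
    then show "\<bar>nn_hidden (leaky \<delta>) ds W B x (Suc k) i - nn_hidden (\<lambda>t. max t 0) ds W B x (Suc k) i\<bar> \<le> \<delta> * (R * C + R * M + SB)
     \<and> \<bar>nn_hidden (\<lambda>t. max t 0) ds W B x (Suc k) i\<bar> \<le> R * M + SB" .
    qed
  show ?case using nn P by blast
qed

lemma eval_approx:
  assumes "0 < \<eta>"
  shows "\<exists>\<delta>. 0 < \<delta> \<and> \<delta> < 1 \<and> (\<forall>x\<in>cube a b n.
     \<bar>nn_eval (leaky \<delta>) ds W B x 0 - nn_eval (\<lambda>t. max t 0) ds W B x 0\<bar> \<le> \<eta>)"
proof -
  define L where "L = length ds - 1"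
  obtain C M where CM: "0 \<le> C" and
    H: "\<And>\<delta> x i. 0 < \<delta> \<Longrightarrow> \<delta> < 1 \<Longrightarrow> x \<in> cube a b n \<Longrightarrow>
     \<bar>nn_hidden (leaky \<delta>) ds W B x (L - 1) i - nn_hidden (\<lambda>t. max t 0) ds W B x (L - 1) i\<bar> \<le> \<delta> * C"
    using hidden_approx[of a b n ds W B "L - 1"] by blast
  define R where "R = (\<Sum>l<ds ! (L - 1). \<bar>W L 0 l\<bar>)"
  have R0: "0 \<le> R" unfolding R_def by (intro sum_nonneg) auto
  define \<delta> where "\<delta> = min (1/2) (\<eta> / (R * C + 1))"
  have RC: "0 < R * C + 1" using R0 CM by (simp add: add_nonneg_pos)
  have \<delta>: "0 < \<delta>" "\<delta> < 1" unfolding \<delta>_def using assms RC by auto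
  have \<delta>\<eta>: "\<delta> * (R * C) \<le> \<eta>"
  proof -
    have "\<delta> \<le> \<eta> / (R * C + 1)" unfolding \<delta>_def by simp
    then have "\<delta> * (R * C + 1) \<le> \<eta>" using RC by (simp add: pos_le_divide_eq)
    then show ?thesis using \<delta> by (simp add: algebra_simps)
  qed
  show ?thesis
  proof (intro exI[of _ \<delta>] conjI \<delta> ballI)
    fix x assume x: "x \<in> cube a b n"
    have e: "\<forall>l<ds ! (L - 1). \<bar>nn_hidden (leaky \<delta>) ds W B x (L - 1) l - nn_hidden (\<lambda>t. max t 0) ds W B x (L - 1) l\<bar> \<le> \<delta> * C"
      using H[OF \<delta> x] by blast
    have "\<bar>nn_eval (leaky \<delta>) ds W B x 0 - nn_eval (\<lambda>t. max t 0) ds W B x 0\<bar> \<le> R * (\<delta> * C)"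
    proof (cases "0 < ds ! L")
      case True
      then show ?thesis unfolding nn_eval_def Let_def L_def[symmetric] R_def
        using sum_diff_bound[OF e, of "W L 0"] by simp
    next
      case False
      then show ?thesis unfolding nn_eval_def Let_def L_def[symmetric] using R0 CM \<delta> by simp
    qed
    then show "\<bar>nn_eval (leaky \<delta>) ds W B x 0 - nn_eval (\<lambda>t. max t 0) ds W B x 0\<bar> \<le> \<eta>"
      using \<delta>\<eta> by (simp add: algebra_simps)
  qed
qed



lemma cont_eval:
  assumes "continuous_on UNIV \<sigma>"
  shows "continuous_on S (\<lambda>x. nn_eval \<sigma> ds W B x i)"
proof -
  have "continuous_on UNIV (\<lambda>x. nn_eval \<sigma> ds W B x i)"
    unfolding nn_eval_def Let_def
    by (cases "i < ds ! (length ds - 1)") (auto intro!: continuous_intros cont_H[OF assms])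
  then show ?thesis using continuous_on_subset by blast
qed

lemma vec_norm_ge: "0 < d \<Longrightarrow> \<bar>v 0\<bar> \<le> vec_norm d v"
proof -
  assume d: "0 < d"
  have "(v 0)\<^sup>2 \<le> (\<Sum>i<d. (v i)\<^sup>2)"
    by (rule member_le_sum[where f="\<lambda>i. (v i)\<^sup>2"]) (use d in auto)
  then have "sqrt ((v 0)\<^sup>2) \<le> sqrt (\<Sum>i<d. (v i)\<^sup>2)" by (rule real_sqrt_le_mono)
  then show ?thesis unfolding vec_norm_def by simp
qed

lemma no_approx:
  fixes \<sigma> :: "real \<Rightarrow> real" and a b :: real and n dout w :: nat
  assumes ab: "a < b" and n1: "1 \<le> n" and d1: "1 \<le> dout" and wn: "w \<le> n"
    and act: "(continuous_on UNIV \<sigma> \<and> strict_mono_or_anti \<sigma>) \<or> \<sigma> = (\<lambda>t. max t 0)"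
  shows "\<not> approx_width \<sigma> a b n dout w"
proof
  assume AW: "approx_width \<sigma> a b n dout w"
  have sc: "continuous_on UNIV \<sigma>" using act relu_cont by auto
  define g where "g x = (\<Prod>i<n. (x i - a) * (b - x i))" for x :: "nat \<Rightarrow> real"
  define f where "f x = (\<lambda>i::nat. if i = 0 then g x else 0)" for x
  define c where "c = (\<lambda>i::nat. if i < n then (a + b) / 2 else 0)"
  have c: "c \<in> cube a b n" using ab unfolding c_def cube_def by auto
  define \<gamma> where "\<gamma> = g c"
  have \<gamma>: "0 < \<gamma>" unfolding \<gamma>_def g_def c_def using ab
    by (intro prod_pos) (auto intro!: mult_pos_pos)
  have g0: "g y = 0" if "i < n" "y i = a \<or> y i = b" for y i
    unfolding g_def using that by (intro prod_zero) auto
  have fc: "\<forall>i<dout. continuous_on (cube a b n) (\<lambda>x. f x i)"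
  proof (intro allI impI)
    fix i
    show "continuous_on (cube a b n) (\<lambda>x. f x i)"
    proof (cases "i = 0")
      case True
      have "continuous_on (cube a b n) g" unfolding g_def
        by (intro continuous_intros continuous_on_subset[OF continuous_on_product_coordinates]) auto
      then show ?thesis using True unfolding f_def by simp
    qed (simp add: f_def)
  qed
  define \<epsilon> where "\<epsilon> = \<gamma> / 8"
  have "\<epsilon> > 0" using \<gamma> unfolding \<epsilon>_def by simp
  then obtain F where F: "is_nn_fun \<sigma> n dout w F"
    and sup: "(SUP x\<in>cube a b n. vec_norm dout (\<lambda>i. f x i - F x i)) < \<epsilon>"
    using AW fc unfolding approx_width_def by blast
  then obtain ds W B where len: "length ds \<ge> 2" and d0: "ds ! 0 = n" and dl: "last ds = dout"
    and pos: "\<forall>d\<in>set ds. 0 < d" and mx: "Max (set (tl ds)) \<le> w" and FF: "F = nn_eval \<sigma> ds W B"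
    unfolding is_nn_fun_def by blast
  have wid: "\<forall>k. 1 \<le> k \<longrightarrow> k < length ds \<longrightarrow> 0 < ds ! k \<and> ds ! k \<le> n"
  proof (intro allI impI conjI)
    fix k assume k: "1 \<le> k" "k < length ds"
    then show "0 < ds ! k" using pos nth_mem by blast
    have "tl ds ! (k - 1) = ds ! k" using k by (simp add: nth_tl)
    moreover have "k - 1 < length (tl ds)" using k by simp
    ultimately have "ds ! k \<in> set (tl ds)" by (metis nth_mem)
    then have "ds ! k \<le> Max (set (tl ds))" by (intro Max_ge) auto
    then show "ds ! k \<le> n" using mx wn by simp
  qed
  have close: "\<bar>f x 0 - F x 0\<bar> < \<epsilon>" if x: "x \<in> cube a b n" for x
  proof -
    have cn: "continuous_on (cube a b n) (\<lambda>x. vec_norm dout (\<lambda>i. f x i - F x i))"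
      unfolding vec_norm_def FF
    proof (intro continuous_intros)
      fix i show "continuous_on (cube a b n) (\<lambda>x. f x i)"
      proof (cases "i = 0")
        case True then show ?thesis using fc d1 by auto
      qed (simp add: f_def)
    qed (rule cont_eval[OF sc])
    have "bdd_above ((\<lambda>x. vec_norm dout (\<lambda>i. f x i - F x i)) ` cube a b n)"
      by (intro bounded_imp_bdd_above compact_imp_bounded compact_continuous_image cn compact_cube)
    then have "vec_norm dout (\<lambda>i. f x i - F x i) \<le> (SUP x\<in>cube a b n. vec_norm dout (\<lambda>i. f x i - F x i))"
      by (rule cSUP_upper[OF x])
    moreover have "\<bar>f x 0 - F x 0\<bar> \<le> vec_norm dout (\<lambda>i. f x i - F x i)"
      using vec_norm_ge[of dout "\<lambda>i. f x i - F x i"] d1 by simp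
    ultimately show ?thesis using sup by linarith
  qed
  have fc0: "f c 0 = \<gamma>" unfolding f_def \<gamma>_def by simp
  have fy0: "f y 0 = 0" if "i < n" "y i = a \<or> y i = b" for y i
    unfolding f_def using g0[where y=y, OF that] by simp
  from act show False
  proof (elim disjE conjE)
    assume sm: "strict_mono_or_anti \<sigma>"
    obtain y i where y: "y \<in> cube a b n" "i < n" "y i = a \<or> y i = b" "F c 0 \<le> F y 0"
      using core[OF sc sm n1 len d0 wid c, of W B] FF by blast
    have "\<bar>\<gamma> - F c 0\<bar> < \<epsilon>" "\<bar>0 - F y 0\<bar> < \<epsilon>"
      using close[OF c] close[OF y(1)] fc0 fy0[where y=y, OF y(2,3)] by auto
    then show False using y(4) \<gamma> unfolding \<epsilon>_def by linarith
  next
    assume relu: "\<sigma> = (\<lambda>t. max t 0)"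
    obtain \<delta> where \<delta>: "0 < \<delta>" "\<delta> < 1" and ap: "\<forall>x\<in>cube a b n.
       \<bar>nn_eval (leaky \<delta>) ds W B x 0 - nn_eval (\<lambda>t. max t 0) ds W B x 0\<bar> \<le> \<gamma> / 8"
      using eval_approx[of "\<gamma> / 8" a b n ds W B] \<gamma> by auto
    obtain y i where y: "y \<in> cube a b n" "i < n" "y i = a \<or> y i = b"
      "nn_eval (leaky \<delta>) ds W B c 0 \<le> nn_eval (leaky \<delta>) ds W B y 0"
      using core[OF leaky_cont leaky_strict[OF \<delta>] n1 len d0 wid c, of W B] by blast
    have "\<bar>\<gamma> - F c 0\<bar> < \<epsilon>" "\<bar>0 - F y 0\<bar> < \<epsilon>"
      using close[OF c] close[OF y(1)] fc0 fy0[where y=y, OF y(2,3)] by auto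
    moreover have "\<bar>nn_eval (leaky \<delta>) ds W B c 0 - F c 0\<bar> \<le> \<gamma> / 8"
      "\<bar>nn_eval (leaky \<delta>) ds W B y 0 - F y 0\<bar> \<le> \<gamma> / 8"
      using ap c y(1) FF relu by auto
    ultimately show False using y(4) \<gamma> unfolding \<epsilon>_def by linarith
  qed
qed

theorem corollary11:
  fixes \<sigma> :: "real \<Rightarrow> real" and a b :: real and din dout :: nat
  assumes "a < b" and "1 \<le> din" and "1 \<le> dout"
    and "(continuous_on UNIV \<sigma> \<and>
          ((\<forall>s t. s < t \<longrightarrow> \<sigma> s < \<sigma> t) \<or> (\<forall>s t. s < t \<longrightarrow> \<sigma> t < \<sigma> s)))
         \<or> \<sigma> = (\<lambda>t. max t 0)"
  shows "enat din < omega_min \<sigma> a b din dout"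
proof -
  have act: "(continuous_on UNIV \<sigma> \<and> strict_mono_or_anti \<sigma>) \<or> \<sigma> = (\<lambda>t. max t 0)"
    using assms(4) unfolding strict_mono_or_anti_def .
  have "enat (Suc din) \<le> omega_min \<sigma> a b din dout"
    unfolding omega_min_def
  proof (rule Inf_greatest)
    fix x assume "x \<in> {enat w |w. approx_width \<sigma> a b din dout w}"
    then obtain w where x: "x = enat w" and aw: "approx_width \<sigma> a b din dout w" by blast
    have "\<not> w \<le> din" using no_approx[OF assms(1,2,3) _ act] aw by blast
    then show "enat (Suc din) \<le> x" using x by simp
  qed
  then show ?thesis by (simp add: Suc_ile_eq)
qed


end
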